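(* Let $G=(V,E)$ be a locally finite, connected graph with symmetric edge weights and a uniformly positive measure, let $\alpha,\beta>1$, and let $\Omega_a,\Omega_b\subset V$ be such that $\Omega_a$, $\Omega_b$ and $\Omega_a\cap\Omega_b$ are non-empty bounded domains. Then the Dirichlet system $$-\Delta u+u=\tfrac{\alpha}{\alpha+\beta}|u|^{\alpha-2}u|v|^\beta\ \text{in }\Omega_a,\quad -\Delta v+v=\tfrac{\beta}{\alpha+\beta}|u|^{\alpha}|v|^{\beta-2}v\ \text{in }\Omega_b,\quad u=0\text{ on }\partial\Omega_a,\ v=0\text{ on }\partial\Omega_b$$ has a ground state solution $(u_\Omega,v_\Omega)\in H_\Omega$, i.e. a weak solution with $(u_\Omega,v_\Omega)\in\mathcal N_\Omega$ and $J_\Omega(u_\Omega,v_\Omega)=c_{\mathcal N_\Omega}$.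
   Context: $G=(V,E)$: $w_{xy}=w_{yx}>0$ for each edge $xy$ ($y\sim x$); $\mu:V\to(0,\infty)$, $\mu\ge\mu_{\min}>0$. $\Delta u(x)=\frac1{\mu(x)}\sum_{y\sim x}w_{xy}(u(y)-u(x))$, $\Gamma(u,v)(x)=\frac1{2\mu(x)}\sum_{y\sim x}w_{xy}(u(y)-u(x))(v(y)-v(x))$, $|\nabla u|^2=\Gamma(u,u)$, $\int_A f\,d\mu=\sum_{x\in A}\mu(x)f(x)$. A bounded domain is a set of vertices with uniformly bounded mutual graph distance. For $\Omega\subset V$: $\partial\Omega=\{y\notin\Omega:\exists x\in\Omega,\ xy\in E\}$, $\overline\Omega=\Omega\cup\partial\Omega$. $W_0^{1,2}(\Omega)$ is the completion of $C_c(\Omega)=\{u:V\to\mathbb{R}$ with support in $\Omega$ (so $u=0$ on $\partial\Omega$)$\}$ under $\|u\|=(\int_{\overline\Omega}|\nabla u|^2d\mu+\int_\Omega u^2d\mu)^{1/2}$. $H_\Omega=W_0^{1,2}(\Omega_a)\times W_0^{1,2}(\Omega_b)$ with inner product $\langle(u,v),(\xi,\eta)\rangle_{H_\Omega}=\int_{\overline\Omega_a\cup\overline\Omega_b}(\Gamma(u,\xi)+\Gamma(v,\eta))d\mu+\int_{\Omega_a\cup\Omega_b}(u\xi+v\eta)d\mu$. $J_\Omega(u,v)=\frac12\int_{\overline\Omega_a\cup\overline\Omega_b}(|\nabla u|^2+|\nabla v|^2)d\mu+\frac12\int_{\Omega_a\cup\Omega_b}(u^2+v^2)d\mu-\frac1{\alpha+\beta}\int_{\Omega_a\cup\Omega_b}|u|^\alpha|v|^\beta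 d\mu$. A weak solution is $(u,v)\in H_\Omega$ with $\langle(u,v),(\xi,\eta)\rangle_{H_\Omega}=\int_{\Omega_a\cup\Omega_b}(\frac{\alpha}{\alpha+\beta}|u|^{\alpha-2}u|v|^\beta\xi+\frac{\beta}{\alpha+\beta}|u|^\alpha|v|^{\beta-2}v\eta)d\mu$ for all $(\xi,\eta)\in H_\Omega$. $\mathcal N_\Omega=\{(u,v)\in H_\Omega\setminus\{(0,0)\}:\langle J_\Omega'(u,v),(u,v)\rangle=0\}$, $c_{\mathcal N_\Omega}=\inf_{\mathcal N_\Omega}J_\Omega$. *)

theory Defs
  imports "HOL-Analysis.Analysis"
begin

text \<open>Weighted graph on vertex type 'v: xy is an edge iff w x y > 0 (w x y = 0 otherwise).\<close>

definition edge_rel :: "('v \<Rightarrow> 'v \<Rightarrow> real) \<Rightarrow> ('v \<times> 'v) set" where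
  "edge_rel w = {(x, y). w x y > 0}"

definition nbrs :: "('v \<Rightarrow> 'v \<Rightarrow> real) \<Rightarrow> 'v \<Rightarrow> 'v set" where
  "nbrs w x = {y. w x y > 0}"

definition weighted_graph :: "('v \<Rightarrow> 'v \<Rightarrow> real) \<Rightarrow> bool" where
  "weighted_graph w \<longleftrightarrow> (\<forall>x y. w x y = w y x) \<and> (\<forall>x y. w x y \<ge> 0)"

definition locally_finite :: "('v \<Rightarrow> 'v \<Rightarrow> real) \<Rightarrow> bool" where
  "locally_finite w \<longleftrightarrow> (\<forall>x. finite (nbrs w x))"

definition graph_connected :: "('v \<Rightarrow> 'v \<Rightarrow> real) \<Rightarrow> bool" where
  "graph_connected w \<longleftrightarrow> (\<forall>x y. (x, y) \<in> (edge_rel w)\<^sup>*)"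

definition bounded_domain :: "('v \<Rightarrow> 'v \<Rightarrow> real) \<Rightarrow> 'v set \<Rightarrow> bool" where
  "bounded_domain w \<Omega> \<longleftrightarrow>
     (\<exists>R::nat. \<forall>x\<in>\<Omega>. \<forall>y\<in>\<Omega>. \<exists>n\<le>R. (x, y) \<in> (edge_rel w) ^^ n)"

definition laplacian :: "('v \<Rightarrow> 'v \<Rightarrow> real) \<Rightarrow> ('v \<Rightarrow> real) \<Rightarrow> ('v \<Rightarrow> real) \<Rightarrow> 'v \<Rightarrow> real" where
  "laplacian w \<mu> u x = (1 / \<mu> x) * (\<Sum>y\<in>nbrs w x. w x y * (u y - u x))"

definition Gam :: "('v \<Rightarrow> 'v \<Rightarrow> real) \<Rightarrow> ('v \<Rightarrow> real) \<Rightarrow> ('v \<Rightarrow> real) \<Rightarrow> ('v \<Rightarrow> real) \<Rightarrow> 'v \<Rightarrow> real" where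
  "Gam w \<mu> u v x = (1 / (2 * \<mu> x)) * (\<Sum>y\<in>nbrs w x. w x y * (u y - u x) * (v y - v x))"

definition integ :: "('v \<Rightarrow> real) \<Rightarrow> 'v set \<Rightarrow> ('v \<Rightarrow> real) \<Rightarrow> real" where
  "integ \<mu> A f = (\<Sum>x\<in>A. \<mu> x * f x)"

definition bdry :: "('v \<Rightarrow> 'v \<Rightarrow> real) \<Rightarrow> 'v set \<Rightarrow> 'v set" where
  "bdry w \<Omega> = {y. y \<notin> \<Omega> \<and> (\<exists>x\<in>\<Omega>. w x y > 0)}"

definition cl :: "('v \<Rightarrow> 'v \<Rightarrow> real) \<Rightarrow> 'v set \<Rightarrow> 'v set" where
  "cl w \<Omega> = \<Omega> \<union> bdry w \<Omega>"

text \<open>W_0^{1,2}(\<Omega>) for a (finite) bounded domain: functions supported in \<Omega>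
  (C_c(\<Omega>) is finite dimensional, hence already complete).\<close>
definition W0 :: "'v set \<Rightarrow> ('v \<Rightarrow> real) set" where
  "W0 \<Omega> = {u. \<forall>x. x \<notin> \<Omega> \<longrightarrow> u x = 0}"

definition H_Om :: "'v set \<Rightarrow> 'v set \<Rightarrow> (('v \<Rightarrow> real) \<times> ('v \<Rightarrow> real)) set" where
  "H_Om \<Omega>a \<Omega>b = W0 \<Omega>a \<times> W0 \<Omega>b"

definition inner_H ::
  "('v \<Rightarrow> 'v \<Rightarrow> real) \<Rightarrow> ('v \<Rightarrow> real) \<Rightarrow> 'v set \<Rightarrow> 'v set \<Rightarrow>
   ('v \<Rightarrow> real) \<Rightarrow> ('v \<Rightarrow> real) \<Rightarrow> ('v \<Rightarrow> real) \<Rightarrow> ('v \<Rightarrow> real) \<Rightarrow> real" where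
  "inner_H w \<mu> \<Omega>a \<Omega>b u v \<xi> \<eta> =
     integ \<mu> (cl w \<Omega>a \<union> cl w \<Omega>b) (\<lambda>x. Gam w \<mu> u \<xi> x + Gam w \<mu> v \<eta> x)
   + integ \<mu> (\<Omega>a \<union> \<Omega>b) (\<lambda>x. u x * \<xi> x + v x * \<eta> x)"

definition J_Om ::
  "('v \<Rightarrow> 'v \<Rightarrow> real) \<Rightarrow> ('v \<Rightarrow> real) \<Rightarrow> 'v set \<Rightarrow> 'v set \<Rightarrow> real \<Rightarrow> real \<Rightarrow>
   ('v \<Rightarrow> real) \<Rightarrow> ('v \<Rightarrow> real) \<Rightarrow> real" where
  "J_Om w \<mu> \<Omega>a \<Omega>b \<alpha> \<beta> u v =
     1/2 * integ \<mu> (cl w \<Omega>a \<union> cl w \<Omega>b) (\<lambda>x. Gam w \<mu> u u x + Gam w \<mu> v v x)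
   + 1/2 * integ \<mu> (\<Omega>a \<union> \<Omega>b) (\<lambda>x. (u x)\<^sup>2 + (v x)\<^sup>2)
   - 1 / (\<alpha> + \<beta>) * integ \<mu> (\<Omega>a \<union> \<Omega>b) (\<lambda>x. \<bar>u x\<bar> powr \<alpha> * \<bar>v x\<bar> powr \<beta>)"

text \<open>Weak solution. |u|^{\<alpha>-2}u is written with powr (0 powr _ = 0, matching the
  convention |u|^{\<alpha>-2}u = 0 at u = 0).\<close>
definition weak_solution ::
  "('v \<Rightarrow> 'v \<Rightarrow> real) \<Rightarrow> ('v \<Rightarrow> real) \<Rightarrow> 'v set \<Rightarrow> 'v set \<Rightarrow> real \<Rightarrow> real \<Rightarrow>
   ('v \<Rightarrow> real) \<Rightarrow> ('v \<Rightarrow> real) \<Rightarrow> bool" where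
  "weak_solution w \<mu> \<Omega>a \<Omega>b \<alpha> \<beta> u v \<longleftrightarrow>
     (u, v) \<in> H_Om \<Omega>a \<Omega>b \<and>
     (\<forall>\<xi> \<eta>. (\<xi>, \<eta>) \<in> H_Om \<Omega>a \<Omega>b \<longrightarrow>
        inner_H w \<mu> \<Omega>a \<Omega>b u v \<xi> \<eta> =
        integ \<mu> (\<Omega>a \<union> \<Omega>b) (\<lambda>x.
            \<alpha> / (\<alpha> + \<beta>) * \<bar>u x\<bar> powr (\<alpha> - 2) * u x * \<bar>v x\<bar> powr \<beta> * \<xi> x
          + \<beta> / (\<alpha> + \<beta>) * \<bar>u x\<bar> powr \<alpha> * \<bar>v x\<bar> powr (\<beta> - 2) * v x * \<eta> x))"

text \<open>Nehari manifold: \<langle>J'(u,v),(u,v)\<rangle> = 0, the derivative of J in direction (u,v),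
  i.e. d/dt J((1+t)u,(1+t)v) at t = 0.\<close>
definition nehari ::
  "('v \<Rightarrow> 'v \<Rightarrow> real) \<Rightarrow> ('v \<Rightarrow> real) \<Rightarrow> 'v set \<Rightarrow> 'v set \<Rightarrow> real \<Rightarrow> real \<Rightarrow>
   (('v \<Rightarrow> real) \<times> ('v \<Rightarrow> real)) set" where
  "nehari w \<mu> \<Omega>a \<Omega>b \<alpha> \<beta> =
     {(u, v). (u, v) \<in> H_Om \<Omega>a \<Omega>b \<and> (u, v) \<noteq> (\<lambda>_. 0, \<lambda>_. 0) \<and>
        ((\<lambda>t. J_Om w \<mu> \<Omega>a \<Omega>b \<alpha> \<beta> (\<lambda>x. u x + t * u x) (\<lambda>x. v x + t * v x))
           has_real_derivative 0) (at 0)}"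

definition c_nehari ::
  "('v \<Rightarrow> 'v \<Rightarrow> real) \<Rightarrow> ('v \<Rightarrow> real) \<Rightarrow> 'v set \<Rightarrow> 'v set \<Rightarrow> real \<Rightarrow> real \<Rightarrow> real" where
  "c_nehari w \<mu> \<Omega>a \<Omega>b \<alpha> \<beta> =
     Inf ((\<lambda>(u, v). J_Om w \<mu> \<Omega>a \<Omega>b \<alpha> \<beta> u v) ` nehari w \<mu> \<Omega>a \<Omega>b \<alpha> \<beta>)"

end

theory Submission
  imports Defs
begin


lemma compact_Pi_UNIV:
  fixes K :: "'a \<Rightarrow> real set"
  assumes "\<And>i. compact (K i)"
  shows "compact (Pi UNIV K)"
proof -
  have "compactin (product_topology (\<lambda>i. euclidean) UNIV) (PiE UNIV K)"
    using assms by (simp add: compactin_PiE)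
  then show ?thesis by (simp add: euclidean_product_topology PiE_UNIV_domain)
qed

lemma finite_reach:
  assumes "locally_finite w"
  shows "finite {y. (x, y) \<in> (edge_rel w) ^^ n}"
proof (induction n)
  case 0 then show ?case by simp
next
  case (Suc n)
  have "{y. (x, y) \<in> (edge_rel w) ^^ Suc n} = (\<Union>z\<in>{y. (x, y) \<in> (edge_rel w) ^^ n}. nbrs w z)"
    unfolding relpow.simps edge_rel_def nbrs_def by blast
  then show ?case using Suc assms by (simp add: locally_finite_def)
qed

lemma finite_bounded_domain:
  assumes "locally_finite w" "bounded_domain w \<Omega>"
  shows "finite \<Omega>"
proof (cases "\<Omega> = {}")
  case False
  then obtain x0 where x0: "x0 \<in> \<Omega>" by auto
  obtain R where R: "\<forall>x\<in>\<Omega>. \<forall>y\<in>\<Omega>. \<exists>n\<le>R. (x, y) \<in> (edge_rel w) ^^ n"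
    using assms(2) by (auto simp: bounded_domain_def)
  have "\<Omega> \<subseteq> (\<Union>n\<in>{..R}. {y. (x0, y) \<in> (edge_rel w) ^^ n})"
  proof
    fix y assume "y \<in> \<Omega>"
    then obtain n where "n \<le> R" "(x0, y) \<in> (edge_rel w) ^^ n" using R x0 by blast
    then show "y \<in> (\<Union>n\<in>{..R}. {y. (x0, y) \<in> (edge_rel w) ^^ n})" by auto
  qed
  moreover have "finite (\<Union>n\<in>{..R}. {y. (x0, y) \<in> (edge_rel w) ^^ n})"
    using finite_reach[OF assms(1)] by blast
  ultimately show ?thesis by (rule finite_subset)
qed simp



definition NN where "NN w \<mu> \<Omega>a \<Omega>b u v = inner_H w \<mu> \<Omega>a \<Omega>b u v u v"
definition FF :: "('v\<Rightarrow>real) \<Rightarrow> 'v set \<Rightarrow> 'v set \<Rightarrow> real \<Rightarrow> real \<Rightarrow> ('v\<Rightarrow>real) \<Rightarrow> ('v\<Rightarrow>real) \<Rightarrow> real"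
  where "FF \<mu> \<Omega>a \<Omega>b \<alpha> \<beta> u v = integ \<mu> (\<Omega>a \<union> \<Omega>b) (\<lambda>x. \<bar>u x\<bar> powr \<alpha> * \<bar>v x\<bar> powr \<beta>)"
definition DD :: "('v\<Rightarrow>real) \<Rightarrow> 'v set \<Rightarrow> 'v set \<Rightarrow> real \<Rightarrow> real \<Rightarrow> ('v\<Rightarrow>real) \<Rightarrow> ('v\<Rightarrow>real) \<Rightarrow> ('v\<Rightarrow>real) \<Rightarrow> ('v\<Rightarrow>real) \<Rightarrow> real"
  where "DD \<mu> \<Omega>a \<Omega>b \<alpha> \<beta> u v \<xi> \<eta> = integ \<mu> (\<Omega>a \<union> \<Omega>b) (\<lambda>x.
     \<alpha> * \<bar>u x\<bar> powr (\<alpha> - 2) * u x * \<bar>v x\<bar> powr \<beta> * \<xi> x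
   + \<beta> * \<bar>u x\<bar> powr \<alpha> * \<bar>v x\<bar> powr (\<beta> - 2) * v x * \<eta> x)"

lemma J_eq: "J_Om w \<mu> \<Omega>a \<Omega>b \<alpha> \<beta> u v = 1/2 * NN w \<mu> \<Omega>a \<Omega>b u v - 1/(\<alpha>+\<beta>) * FF \<mu> \<Omega>a \<Omega>b \<alpha> \<beta> u v"
proof -
  have "integ \<mu> (\<Omega>a \<union> \<Omega>b) (\<lambda>x. (u x)\<^sup>2 + (v x)\<^sup>2) = integ \<mu> (\<Omega>a \<union> \<Omega>b) (\<lambda>x. u x * u x + v x * v x)"
    by (simp add: power2_eq_square)
  then show ?thesis unfolding J_Om_def NN_def FF_def inner_H_def by (simp add: algebra_simps)
qed

lemma integ_add: "integ \<mu> A (\<lambda>x. f x + g x) = integ \<mu> A f + integ \<mu> A g"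
  unfolding integ_def by (simp add: distrib_left sum.distrib)
lemma integ_cmult: "integ \<mu> A (\<lambda>x. c * f x) = c * integ \<mu> A f"
  unfolding integ_def by (simp add: sum_distrib_left algebra_simps)
lemma integ_cong: "(\<And>x. x \<in> A \<Longrightarrow> f x = g x) \<Longrightarrow> integ \<mu> A f = integ \<mu> A g"
  unfolding integ_def by simp

lemma Gam_scale: "Gam w \<mu> (\<lambda>x. a * u x) (\<lambda>x. b * v x) y = a * b * Gam w \<mu> u v y"
proof -
  have "(\<Sum>z\<in>nbrs w y. w y z * (a * u z - a * u y) * (b * v z - b * v y))
      = (\<Sum>z\<in>nbrs w y. a * b * (w y z * (u z - u y) * (v z - v y)))"
    by (rule sum.cong) (auto simp: algebra_simps)
  then show ?thesis unfolding Gam_def by (simp add: sum_distrib_left[symmetric])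
qed

lemma Gam_sym: "Gam w \<mu> u v y = Gam w \<mu> v u y"
  unfolding Gam_def by (simp add: algebra_simps)

lemma Gam_expand:
  "Gam w \<mu> (\<lambda>x. u x + s * \<xi> x) (\<lambda>x. u x + s * \<xi> x) y
   = Gam w \<mu> u u y + 2 * s * Gam w \<mu> u \<xi> y + s\<^sup>2 * Gam w \<mu> \<xi> \<xi> y"
proof -
  have "(\<Sum>z\<in>nbrs w y. w y z * (u z + s * \<xi> z - (u y + s * \<xi> y)) * (u z + s * \<xi> z - (u y + s * \<xi> y)))
      = (\<Sum>z\<in>nbrs w y. w y z * (u z - u y) * (u z - u y) + 2 * s * (w y z * (u z - u y) * (\<xi> z - \<xi> y))
            + s\<^sup>2 * (w y z * (\<xi> z - \<xi> y) * (\<xi> z - \<xi> y)))"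
    by (rule sum.cong) (auto simp: algebra_simps power2_eq_square)
  also have "\<dots> = (\<Sum>z\<in>nbrs w y. w y z * (u z - u y) * (u z - u y)) + 2 * s * (\<Sum>z\<in>nbrs w y. w y z * (u z - u y) * (\<xi> z - \<xi> y))
            + s\<^sup>2 * (\<Sum>z\<in>nbrs w y. w y z * (\<xi> z - \<xi> y) * (\<xi> z - \<xi> y))"
    by (simp add: sum.distrib sum_distrib_left)
  finally show ?thesis unfolding Gam_def by (simp add: algebra_simps)
qed

lemma NN_expand:
  "NN w \<mu> \<Omega>a \<Omega>b (\<lambda>x. u x + s * \<xi> x) (\<lambda>x. v x + s * \<eta> x)
   = NN w \<mu> \<Omega>a \<Omega>b u v + 2 * s * inner_H w \<mu> \<Omega>a \<Omega>b u v \<xi> \<eta> + s\<^sup>2 * NN w \<mu> \<Omega>a \<Omega>b \<xi> \<eta>"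
proof -
  let ?C = "cl w \<Omega>a \<union> cl w \<Omega>b" and ?O = "\<Omega>a \<union> \<Omega>b"
  have 1: "integ \<mu> ?C (\<lambda>x. Gam w \<mu> (\<lambda>x. u x + s * \<xi> x) (\<lambda>x. u x + s * \<xi> x) x + Gam w \<mu> (\<lambda>x. v x + s * \<eta> x) (\<lambda>x. v x + s * \<eta> x) x)
    = integ \<mu> ?C (\<lambda>x. Gam w \<mu> u u x + Gam w \<mu> v v x) + 2 * s * integ \<mu> ?C (\<lambda>x. Gam w \<mu> u \<xi> x + Gam w \<mu> v \<eta> x)
      + s\<^sup>2 * integ \<mu> ?C (\<lambda>x. Gam w \<mu> \<xi> \<xi> x + Gam w \<mu> \<eta> \<eta> x)"
    unfolding Gam_expand integ_def by (simp add: sum.distrib sum_distrib_left algebra_simps)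
  have 2: "integ \<mu> ?O (\<lambda>x. (u x + s * \<xi> x) * (u x + s * \<xi> x) + (v x + s * \<eta> x) * (v x + s * \<eta> x))
    = integ \<mu> ?O (\<lambda>x. u x * u x + v x * v x) + 2 * s * integ \<mu> ?O (\<lambda>x. u x * \<xi> x + v x * \<eta> x)
      + s\<^sup>2 * integ \<mu> ?O (\<lambda>x. \<xi> x * \<xi> x + \<eta> x * \<eta> x)"
    unfolding integ_def by (simp add: sum.distrib sum_distrib_left algebra_simps power2_eq_square)
  show ?thesis unfolding NN_def inner_H_def 1 2 by (simp add: algebra_simps)
qed

lemma NN_scale: "NN w \<mu> \<Omega>a \<Omega>b (\<lambda>x. a * u x) (\<lambda>x. a * v x) = a\<^sup>2 * NN w \<mu> \<Omega>a \<Omega>b u v"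
  unfolding NN_def inner_H_def Gam_scale integ_def
  by (simp add: sum_distrib_left algebra_simps power2_eq_square)

lemma inner_scale: "inner_H w \<mu> \<Omega>a \<Omega>b (\<lambda>x. a * u x) (\<lambda>x. a * v x) \<xi> \<eta> = a * inner_H w \<mu> \<Omega>a \<Omega>b u v \<xi> \<eta>"
proof -
  have "\<And>y. Gam w \<mu> (\<lambda>x. a * u x) \<xi> y = a * Gam w \<mu> u \<xi> y"
    using Gam_scale[of w \<mu> a u 1 \<xi>] by simp
  moreover have "\<And>y. Gam w \<mu> (\<lambda>x. a * v x) \<eta> y = a * Gam w \<mu> v \<eta> y"
    using Gam_scale[of w \<mu> a v 1 \<eta>] by simp
  ultimately show ?thesis unfolding inner_H_def integ_def
    by (simp add: sum_distrib_left algebra_simps)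
qed

lemma FF_scale: "FF \<mu> \<Omega>a \<Omega>b \<alpha> \<beta> (\<lambda>x. a * u x) (\<lambda>x. a * v x) = \<bar>a\<bar> powr (\<alpha>+\<beta>) * FF \<mu> \<Omega>a \<Omega>b \<alpha> \<beta> u v"
  unfolding FF_def integ_def
  by (simp add: sum_distrib_left abs_mult powr_mult powr_add algebra_simps)

lemma DD_scale:
  assumes "a > 0"
  shows "DD \<mu> \<Omega>a \<Omega>b \<alpha> \<beta> (\<lambda>x. a * u x) (\<lambda>x. a * v x) \<xi> \<eta> = a powr (\<alpha>+\<beta>-1) * DD \<mu> \<Omega>a \<Omega>b \<alpha> \<beta> u v \<xi> \<eta>"
proof -
  have e1: "a powr (\<alpha> - 2) * a * a powr \<beta> = a powr (\<alpha>+\<beta>-1)"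
  proof -
    have "a powr (\<alpha>+\<beta>-1) = a powr ((\<alpha> - 2) + 1 + \<beta>)" by (simp add: algebra_simps)
    also have "\<dots> = a powr (\<alpha> - 2) * a powr 1 * a powr \<beta>" by (simp only: powr_add)
    finally show ?thesis using assms by simp
  qed
  have e2: "a powr \<alpha> * a powr (\<beta> - 2) * a = a powr (\<alpha>+\<beta>-1)"
  proof -
    have "a powr (\<alpha>+\<beta>-1) = a powr (\<alpha> + (\<beta> - 2) + 1)" by (simp add: algebra_simps)
    also have "\<dots> = a powr \<alpha> * a powr (\<beta> - 2) * a powr 1" by (simp only: powr_add)
    finally show ?thesis using assms by simp
  qed
  have "\<And>x. \<alpha> * \<bar>a * u x\<bar> powr (\<alpha> - 2) * (a * u x) * \<bar>a * v x\<bar> powr \<beta> * \<xi> x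
   + \<beta> * \<bar>a * u x\<bar> powr \<alpha> * \<bar>a * v x\<bar> powr (\<beta> - 2) * (a * v x) * \<eta> x
   = a powr (\<alpha>+\<beta>-1) * (\<alpha> * \<bar>u x\<bar> powr (\<alpha> - 2) * u x * \<bar>v x\<bar> powr \<beta> * \<xi> x
   + \<beta> * \<bar>u x\<bar> powr \<alpha> * \<bar>v x\<bar> powr (\<beta> - 2) * v x * \<eta> x)"
  proof -
    fix x
    have "\<alpha> * \<bar>a * u x\<bar> powr (\<alpha> - 2) * (a * u x) * \<bar>a * v x\<bar> powr \<beta> * \<xi> x
      = (a powr (\<alpha> - 2) * a * a powr \<beta>) * (\<alpha> * \<bar>u x\<bar> powr (\<alpha> - 2) * u x * \<bar>v x\<bar> powr \<beta> * \<xi> x)"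
      using assms by (simp add: abs_mult powr_mult)
    also have "\<dots> = a powr (\<alpha>+\<beta>-1) * (\<alpha> * \<bar>u x\<bar> powr (\<alpha> - 2) * u x * \<bar>v x\<bar> powr \<beta> * \<xi> x)"
      by (simp only: e1)
    finally have h1: "\<alpha> * \<bar>a * u x\<bar> powr (\<alpha> - 2) * (a * u x) * \<bar>a * v x\<bar> powr \<beta> * \<xi> x = a powr (\<alpha>+\<beta>-1) * (\<alpha> * \<bar>u x\<bar> powr (\<alpha> - 2) * u x * \<bar>v x\<bar> powr \<beta> * \<xi> x)" .
    have "\<beta> * \<bar>a * u x\<bar> powr \<alpha> * \<bar>a * v x\<bar> powr (\<beta> - 2) * (a * v x) * \<eta> x
      = (a powr \<alpha> * a powr (\<beta> - 2) * a) * (\<beta> * \<bar>u x\<bar> powr \<alpha> * \<bar>v x\<bar> powr (\<beta> - 2) * v x * \<eta> x)"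
      using assms by (simp add: abs_mult powr_mult)
    also have "\<dots> = a powr (\<alpha>+\<beta>-1) * (\<beta> * \<bar>u x\<bar> powr \<alpha> * \<bar>v x\<bar> powr (\<beta> - 2) * v x * \<eta> x)"
      by (simp only: e2)
    finally have h2: "\<beta> * \<bar>a * u x\<bar> powr \<alpha> * \<bar>a * v x\<bar> powr (\<beta> - 2) * (a * v x) * \<eta> x = a powr (\<alpha>+\<beta>-1) * (\<beta> * \<bar>u x\<bar> powr \<alpha> * \<bar>v x\<bar> powr (\<beta> - 2) * v x * \<eta> x)" .
    show "?thesis x" by (simp only: h1 h2 distrib_left)
  qed
  then show ?thesis unfolding DD_def integ_def by (simp add: sum_distrib_left algebra_simps)
qed



lemma deriv_abs_powr0:
  fixes b \<alpha> :: real
  assumes "\<alpha> > 1"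
  shows "((\<lambda>s. \<bar>0 + s * b\<bar> powr \<alpha>) has_real_derivative 0) (at 0)"
proof -
  let ?c = "\<bar>b\<bar> powr \<alpha>"
  have lim: "((\<lambda>h. ?c * \<bar>h\<bar> powr (\<alpha> - 1)) \<longlongrightarrow> 0) (at (0::real))"
  proof -
    have "((\<lambda>h. \<bar>h\<bar> powr (\<alpha> - 1)) \<longlongrightarrow> 0) (at (0::real))"
      by (rule tendsto_zero_powrI) (auto intro!: tendsto_eq_intros simp: assms)
    then show ?thesis by (rule tendsto_mult_right_zero)
  qed
  have "((\<lambda>h. (\<bar>0 + (0 + h) * b\<bar> powr \<alpha> - \<bar>0 + 0 * b\<bar> powr \<alpha>) / h) \<longlongrightarrow> 0) (at (0::real))"
  proof (rule Lim_null_comparison[OF _ lim])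
    show "\<forall>\<^sub>F h in at 0. norm ((\<bar>0 + (0 + h) * b\<bar> powr \<alpha> - \<bar>0 + 0 * b\<bar> powr \<alpha>) / h) \<le> ?c * \<bar>h\<bar> powr (\<alpha> - 1)"
    proof (rule eventually_at_filter[THEN iffD2], rule always_eventually, intro allI impI)
      fix h :: real assume "h \<noteq> 0"
      then have "\<bar>h\<bar> powr (\<alpha> - 1) = \<bar>h\<bar> powr \<alpha> / \<bar>h\<bar>" by (simp add: powr_diff)
      then show "norm ((\<bar>0 + (0 + h) * b\<bar> powr \<alpha> - \<bar>0 + 0 * b\<bar> powr \<alpha>) / h) \<le> ?c * \<bar>h\<bar> powr (\<alpha> - 1)"
        by (simp add: abs_mult powr_mult abs_divide mult.commute)
    qed
  qed
  then show ?thesis by (simp only: DERIV_def)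
qed

lemma deriv_abs_powr:
  fixes a b \<alpha> :: real
  assumes "\<alpha> > 1"
  shows "((\<lambda>s. \<bar>a + s * b\<bar> powr \<alpha>) has_real_derivative (\<alpha> * \<bar>a\<bar> powr (\<alpha> - 2) * a * b)) (at 0)"
proof (cases "a = 0")
  case True
  then show ?thesis using deriv_abs_powr0[OF assms, of b] by simp
next
  case False
  have ev: "eventually (\<lambda>s. (a + s * b) * a > 0) (nhds (0::real))"
  proof -
    have "((\<lambda>s::real. (a + s * b) * a) \<longlongrightarrow> (a + 0 * b) * a) (nhds 0)"
      by (intro tendsto_intros) (rule filterlim_ident)
    moreover have "(a + 0 * b) * a > 0" using False by (simp add: zero_less_mult_iff linorder_neq_iff disj_commute)
    ultimately show ?thesis by (rule order_tendstoD)
  qed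
  have ev2: "eventually (\<lambda>s. \<bar>a + s * b\<bar> = sgn a * (a + s * b)) (nhds (0::real))"
    using ev
  proof (rule eventually_mono)
    fix s assume "(a + s * b) * a > 0"
    then show "\<bar>a + s * b\<bar> = sgn a * (a + s * b)"
      by (cases "a > 0") (auto simp: zero_less_mult_iff abs_if)
  qed
  have dg: "((\<lambda>s. \<bar>a + s * b\<bar>) has_real_derivative (sgn a * b)) (at 0)"
  proof (subst DERIV_cong_ev[OF refl ev2 refl])
    show "((\<lambda>s. sgn a * (a + s * b)) has_real_derivative sgn a * b) (at 0)"
      by (auto intro!: derivative_eq_intros)
  qed
  have "((\<lambda>s. \<bar>a + s * b\<bar> powr \<alpha>) has_real_derivative \<alpha> * \<bar>a + 0 * b\<bar> powr (\<alpha> - of_nat 1) * (sgn a * b)) (at 0)"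
    by (rule DERIV_fun_powr[OF dg]) (use False in simp)
  moreover have "\<alpha> * \<bar>a + 0 * b\<bar> powr (\<alpha> - of_nat 1) * (sgn a * b) = \<alpha> * \<bar>a\<bar> powr (\<alpha> - 2) * a * b"
  proof -
    have "\<bar>a\<bar> powr (\<alpha> - 1) = \<bar>a\<bar> powr (\<alpha> - 2) * \<bar>a\<bar>"
    proof -
      have "\<bar>a\<bar> powr (\<alpha> - 1) = \<bar>a\<bar> powr ((\<alpha> - 2) + 1)" by simp
      also have "\<dots> = \<bar>a\<bar> powr (\<alpha> - 2) * \<bar>a\<bar> powr 1" by (simp only: powr_add)
      finally show ?thesis using False by simp
    qed
    moreover have "\<bar>a\<bar> * sgn a = a" by (simp add: abs_mult_sgn)
    ultimately show ?thesis by (simp add: algebra_simps)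
  qed
  ultimately show ?thesis by (simp only:)
qed



lemma cont_fst_coord[continuous_intros]: "continuous_on S (\<lambda>p::('a\<Rightarrow>real)\<times>('b\<Rightarrow>real). fst p y)"
  by (rule continuous_on_compose2[OF continuous_on_product_coordinates continuous_on_fst[OF continuous_on_id]]) auto
lemma cont_snd_coord[continuous_intros]: "continuous_on S (\<lambda>p::('a\<Rightarrow>real)\<times>('b\<Rightarrow>real). snd p y)"
  by (rule continuous_on_compose2[OF continuous_on_product_coordinates continuous_on_snd[OF continuous_on_id]]) auto

lemma cont_abs_powr[continuous_intros]:
  fixes f :: "_ \<Rightarrow> real"
  assumes "continuous_on S f" "\<alpha> > 0"
  shows "continuous_on S (\<lambda>p. \<bar>f p\<bar> powr \<alpha>)"
  by (rule continuous_on_powr') (use assms in \<open>auto intro!: continuous_intros\<close>)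

lemma cont_NN: "continuous_on S (\<lambda>p. NN w \<mu> \<Omega>a \<Omega>b (fst p) (snd p))"
  unfolding NN_def inner_H_def integ_def Gam_def by (intro continuous_intros)

lemma cont_FF: "\<alpha> > 0 \<Longrightarrow> \<beta> > 0 \<Longrightarrow> continuous_on S (\<lambda>p. FF \<mu> \<Omega>a \<Omega>b \<alpha> \<beta> (fst p) (snd p))"
  unfolding FF_def integ_def by (intro continuous_intros) auto

lemma FF_deriv:
  assumes "\<alpha> > 1" "\<beta> > 1"
  shows "((\<lambda>s. FF \<mu> \<Omega>a \<Omega>b \<alpha> \<beta> (\<lambda>x. u x + s * \<xi> x) (\<lambda>x. v x + s * \<eta> x)) has_real_derivative DD \<mu> \<Omega>a \<Omega>b \<alpha> \<beta> u v \<xi> \<eta>) (at 0)"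
  unfolding FF_def DD_def integ_def
proof (rule DERIV_sum)
  fix x
  have "((\<lambda>s. \<bar>u x + s * \<xi> x\<bar> powr \<alpha> * \<bar>v x + s * \<eta> x\<bar> powr \<beta>) has_real_derivative
     (\<alpha> * \<bar>u x\<bar> powr (\<alpha> - 2) * u x * \<xi> x) * \<bar>v x + 0 * \<eta> x\<bar> powr \<beta> + (\<beta> * \<bar>v x\<bar> powr (\<beta> - 2) * v x * \<eta> x) * \<bar>u x + 0 * \<xi> x\<bar> powr \<alpha>) (at 0)"
    by (rule DERIV_mult[OF deriv_abs_powr[OF assms(1)] deriv_abs_powr[OF assms(2)]])
  then have "((\<lambda>s. \<mu> x * (\<bar>u x + s * \<xi> x\<bar> powr \<alpha> * \<bar>v x + s * \<eta> x\<bar> powr \<beta>)) has_real_derivative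
     \<mu> x * ((\<alpha> * \<bar>u x\<bar> powr (\<alpha> - 2) * u x * \<xi> x) * \<bar>v x + 0 * \<eta> x\<bar> powr \<beta> + (\<beta> * \<bar>v x\<bar> powr (\<beta> - 2) * v x * \<eta> x) * \<bar>u x + 0 * \<xi> x\<bar> powr \<alpha>)) (at 0)"
    by (rule DERIV_cmult)
  moreover have "\<mu> x * ((\<alpha> * \<bar>u x\<bar> powr (\<alpha> - 2) * u x * \<xi> x) * \<bar>v x + 0 * \<eta> x\<bar> powr \<beta> + (\<beta> * \<bar>v x\<bar> powr (\<beta> - 2) * v x * \<eta> x) * \<bar>u x + 0 * \<xi> x\<bar> powr \<alpha>)
    = \<mu> x * (\<alpha> * \<bar>u x\<bar> powr (\<alpha> - 2) * u x * \<bar>v x\<bar> powr \<beta> * \<xi> x + \<beta> * \<bar>u x\<bar> powr \<alpha> * \<bar>v x\<bar> powr (\<beta> - 2) * v x * \<eta> x)"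
    by (simp add: algebra_simps)
  ultimately show "((\<lambda>s. \<mu> x * (\<bar>u x + s * \<xi> x\<bar> powr \<alpha> * \<bar>v x + s * \<eta> x\<bar> powr \<beta>)) has_real_derivative
     \<mu> x * (\<alpha> * \<bar>u x\<bar> powr (\<alpha> - 2) * u x * \<bar>v x\<bar> powr \<beta> * \<xi> x + \<beta> * \<bar>u x\<bar> powr \<alpha> * \<bar>v x\<bar> powr (\<beta> - 2) * v x * \<eta> x)) (at 0)"
    by (metis (no_types, lifting))
qed

lemma NN_deriv:
  "((\<lambda>s. NN w \<mu> \<Omega>a \<Omega>b (\<lambda>x. u x + s * \<xi> x) (\<lambda>x. v x + s * \<eta> x)) has_real_derivative 2 * inner_H w \<mu> \<Omega>a \<Omega>b u v \<xi> \<eta>) (at 0)"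
  unfolding NN_expand by (auto intro!: derivative_eq_intros)



lemma J_scale_deriv:
  assumes "\<alpha> > 1" "\<beta> > 1"
  shows "((\<lambda>t. J_Om w \<mu> \<Omega>a \<Omega>b \<alpha> \<beta> (\<lambda>x. u x + t * u x) (\<lambda>x. v x + t * v x)) has_real_derivative
          NN w \<mu> \<Omega>a \<Omega>b u v - FF \<mu> \<Omega>a \<Omega>b \<alpha> \<beta> u v) (at 0)"
proof -
  let ?N = "NN w \<mu> \<Omega>a \<Omega>b u v" and ?F = "FF \<mu> \<Omega>a \<Omega>b \<alpha> \<beta> u v"
  have fe: "\<And>t. (\<lambda>x. u x + t * u x) = (\<lambda>x. (1 + t) * u x)" "\<And>t. (\<lambda>x. v x + t * v x) = (\<lambda>x. (1 + t) * v x)"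
    by (auto simp: algebra_simps)
  have eq: "(\<lambda>t. J_Om w \<mu> \<Omega>a \<Omega>b \<alpha> \<beta> (\<lambda>x. u x + t * u x) (\<lambda>x. v x + t * v x))
      = (\<lambda>t. 1/2 * ((1 + t)\<^sup>2 * ?N) - 1/(\<alpha>+\<beta>) * (\<bar>1 + t * 1\<bar> powr (\<alpha>+\<beta>) * ?F))"
    unfolding fe J_eq NN_scale FF_scale by simp
  have d: "((\<lambda>t. \<bar>1 + t * 1\<bar> powr (\<alpha>+\<beta>)) has_real_derivative ((\<alpha>+\<beta>) * \<bar>1\<bar> powr (\<alpha>+\<beta> - 2) * 1 * 1)) (at 0)"
    by (rule deriv_abs_powr) (use assms in simp)
  have d': "((\<lambda>t. \<bar>1 + t * 1\<bar> powr (\<alpha>+\<beta>)) has_real_derivative (\<alpha>+\<beta>)) (at 0)"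
    using d by simp
  have a: "((\<lambda>t. (1 + t)\<^sup>2) has_real_derivative 2) (at (0::real))"
    by (auto intro!: derivative_eq_intros)
  have "((\<lambda>t. 1/2 * ((1 + t)\<^sup>2 * ?N) - 1/(\<alpha>+\<beta>) * (\<bar>1 + t * 1\<bar> powr (\<alpha>+\<beta>) * ?F)) has_real_derivative
     1/2 * (2 * ?N) - 1/(\<alpha>+\<beta>) * ((\<alpha>+\<beta>) * ?F)) (at 0)"
    by (rule DERIV_diff[OF DERIV_cmult[OF DERIV_cmult_right[OF a]] DERIV_cmult[OF DERIV_cmult_right[OF d']]])
  moreover have "1/2 * (2 * ?N) - 1/(\<alpha>+\<beta>) * ((\<alpha>+\<beta>) * ?F) = ?N - ?F"
    using assms by simp
  ultimately show ?thesis unfolding eq by simp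
qed

lemma nehari_iff:
  assumes "\<alpha> > 1" "\<beta> > 1"
  shows "(u, v) \<in> nehari w \<mu> \<Omega>a \<Omega>b \<alpha> \<beta> \<longleftrightarrow>
    (u, v) \<in> H_Om \<Omega>a \<Omega>b \<and> (u, v) \<noteq> (\<lambda>_. 0, \<lambda>_. 0) \<and> NN w \<mu> \<Omega>a \<Omega>b u v = FF \<mu> \<Omega>a \<Omega>b \<alpha> \<beta> u v"
proof -
  have "((\<lambda>t. J_Om w \<mu> \<Omega>a \<Omega>b \<alpha> \<beta> (\<lambda>x. u x + t * u x) (\<lambda>x. v x + t * v x)) has_real_derivative 0) (at 0)
     \<longleftrightarrow> NN w \<mu> \<Omega>a \<Omega>b u v - FF \<mu> \<Omega>a \<Omega>b \<alpha> \<beta> u v = 0"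
  proof
    assume "((\<lambda>t. J_Om w \<mu> \<Omega>a \<Omega>b \<alpha> \<beta> (\<lambda>x. u x + t * u x) (\<lambda>x. v x + t * v x)) has_real_derivative 0) (at 0)"
    from DERIV_unique[OF J_scale_deriv[OF assms, of w \<mu> \<Omega>a \<Omega>b u v] this]
    show "NN w \<mu> \<Omega>a \<Omega>b u v - FF \<mu> \<Omega>a \<Omega>b \<alpha> \<beta> u v = 0" .
  next
    assume "NN w \<mu> \<Omega>a \<Omega>b u v - FF \<mu> \<Omega>a \<Omega>b \<alpha> \<beta> u v = 0"
    then show "((\<lambda>t. J_Om w \<mu> \<Omega>a \<Omega>b \<alpha> \<beta> (\<lambda>x. u x + t * u x) (\<lambda>x. v x + t * v x)) has_real_derivative 0) (at 0)"
      using J_scale_deriv[OF assms, of w \<mu> \<Omega>a \<Omega>b u v] by simp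
  qed
  then show ?thesis unfolding nehari_def mem_Collect_eq prod.case by simp
qed

lemma Gam_nonneg:
  assumes "weighted_graph w" "\<mu> y > 0"
  shows "Gam w \<mu> u u y \<ge> 0"
proof -
  have "\<And>z. w y z * (u z - u y) * (u z - u y) \<ge> 0"
    using assms(1) unfolding weighted_graph_def mult.assoc by (simp add: mult_nonneg_nonneg)
  then have "(\<Sum>z\<in>nbrs w y. w y z * (u z - u y) * (u z - u y)) \<ge> 0" by (simp add: sum_nonneg)
  then show ?thesis unfolding Gam_def using assms(2) by simp
qed

lemma NN_lower:
  assumes "weighted_graph w" "\<forall>x. \<mu> x > 0" "finite \<Omega>a" "finite \<Omega>b" "x \<in> \<Omega>a \<union> \<Omega>b"
  shows "\<mu> x * ((u x)\<^sup>2 + (v x)\<^sup>2) \<le> NN w \<mu> \<Omega>a \<Omega>b u v"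
proof -
  have g: "integ \<mu> (cl w \<Omega>a \<union> cl w \<Omega>b) (\<lambda>x. Gam w \<mu> u u x + Gam w \<mu> v v x) \<ge> 0"
    unfolding integ_def using Gam_nonneg[OF assms(1), of \<mu>] assms(2)
    by (intro sum_nonneg) (simp add: less_imp_le)
  have "\<mu> x * (u x * u x + v x * v x) \<le> integ \<mu> (\<Omega>a \<union> \<Omega>b) (\<lambda>x. u x * u x + v x * v x)"
    unfolding integ_def using assms
    by (intro member_le_sum) (auto simp: less_imp_le)
  then show ?thesis using g unfolding NN_def inner_H_def by (simp add: power2_eq_square)
qed

lemma NN_nonneg:
  assumes "weighted_graph w" "\<forall>x. \<mu> x > 0" "finite \<Omega>a" "finite \<Omega>b"
  shows "NN w \<mu> \<Omega>a \<Omega>b u v \<ge> 0"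
proof -
  have g: "integ \<mu> (cl w \<Omega>a \<union> cl w \<Omega>b) (\<lambda>x. Gam w \<mu> u u x + Gam w \<mu> v v x) \<ge> 0"
    unfolding integ_def using Gam_nonneg[OF assms(1), of \<mu>] assms(2)
    by (intro sum_nonneg) (simp add: less_imp_le)
  have "integ \<mu> (\<Omega>a \<union> \<Omega>b) (\<lambda>x. u x * u x + v x * v x) \<ge> 0"
    unfolding integ_def using assms
    by (intro sum_nonneg) (auto simp: less_imp_le)
  then show ?thesis using g unfolding NN_def inner_H_def by simp
qed

lemma NN_pos:
  assumes "weighted_graph w" "\<forall>x. \<mu> x > 0" "finite \<Omega>a" "finite \<Omega>b"
    and "(u, v) \<in> H_Om \<Omega>a \<Omega>b" "(u, v) \<noteq> (\<lambda>_. 0, \<lambda>_. 0)"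
  shows "NN w \<mu> \<Omega>a \<Omega>b u v > 0"
proof -
  obtain x where x: "u x \<noteq> 0 \<or> v x \<noteq> 0" using assms(6) by fastforce
  then have xin: "x \<in> \<Omega>a \<union> \<Omega>b" using assms(5) by (auto simp: H_Om_def W0_def)
  have "(u x)\<^sup>2 + (v x)\<^sup>2 > 0" using x by (auto simp: add_pos_nonneg add_nonneg_pos)
  then have "\<mu> x * ((u x)\<^sup>2 + (v x)\<^sup>2) > 0" using assms(2) by simp
  then show ?thesis using NN_lower[OF assms(1-4) xin, of u v] by linarith
qed

lemma FF_nonneg:
  assumes "\<forall>x. \<mu> x > 0"
  shows "FF \<mu> \<Omega>a \<Omega>b \<alpha> \<beta> u v \<ge> 0"
  unfolding FF_def integ_def using assms by (intro sum_nonneg mult_nonneg_nonneg) (auto simp: less_imp_le)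

lemma weak_rhs:
  "integ \<mu> A (\<lambda>x. \<alpha> / (\<alpha> + \<beta>) * \<bar>u x\<bar> powr (\<alpha> - 2) * u x * \<bar>v x\<bar> powr \<beta> * \<xi> x
          + \<beta> / (\<alpha> + \<beta>) * \<bar>u x\<bar> powr \<alpha> * \<bar>v x\<bar> powr (\<beta> - 2) * v x * \<eta> x)
   = DD \<mu> \<Omega>a \<Omega>b \<alpha> \<beta> u v \<xi> \<eta> / (\<alpha> + \<beta>)" if "A = \<Omega>a \<union> \<Omega>b"
  unfolding DD_def integ_def that sum_divide_distrib by (rule sum.cong) (auto simp: add_divide_distrib algebra_simps)

lemma H_scale: "(u, v) \<in> H_Om \<Omega>a \<Omega>b \<Longrightarrow> (\<lambda>x. a * u x, \<lambda>x. a * v x) \<in> H_Om \<Omega>a \<Omega>b"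
  by (auto simp: H_Om_def W0_def)
lemma H_add: "(u, v) \<in> H_Om \<Omega>a \<Omega>b \<Longrightarrow> (\<xi>, \<eta>) \<in> H_Om \<Omega>a \<Omega>b \<Longrightarrow>
   (\<lambda>x. u x + s * \<xi> x, \<lambda>x. v x + s * \<eta> x) \<in> H_Om \<Omega>a \<Omega>b"
  by (auto simp: H_Om_def W0_def)

lemma normalize:
  assumes "\<alpha> > 1" "\<beta> > 1" "FF \<mu> \<Omega>a \<Omega>b \<alpha> \<beta> u v > 0"
  defines "k \<equiv> FF \<mu> \<Omega>a \<Omega>b \<alpha> \<beta> u v powr (-1/(\<alpha>+\<beta>))"
  shows "k > 0" "FF \<mu> \<Omega>a \<Omega>b \<alpha> \<beta> (\<lambda>x. k * u x) (\<lambda>x. k * v x) = 1"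
    "NN w \<mu> \<Omega>a \<Omega>b (\<lambda>x. k * u x) (\<lambda>x. k * v x) = NN w \<mu> \<Omega>a \<Omega>b u v / FF \<mu> \<Omega>a \<Omega>b \<alpha> \<beta> u v powr (2/(\<alpha>+\<beta>))"
proof -
  let ?F = "FF \<mu> \<Omega>a \<Omega>b \<alpha> \<beta> u v"
  show kp: "k > 0" using assms(3) unfolding k_def by simp
  have "\<bar>k\<bar> powr (\<alpha>+\<beta>) = ?F powr (-1)"
    using kp assms unfolding k_def by (simp add: powr_powr)
  then show "FF \<mu> \<Omega>a \<Omega>b \<alpha> \<beta> (\<lambda>x. k * u x) (\<lambda>x. k * v x) = 1"
    unfolding FF_scale using assms(3) by (simp add: powr_minus_divide)
  have "k\<^sup>2 = ?F powr (-2/(\<alpha>+\<beta>))"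
  proof -
    have "k\<^sup>2 = k powr 2" using kp by (simp add: powr_numeral)
    also have "\<dots> = ?F powr (-2/(\<alpha>+\<beta>))" unfolding k_def by (simp add: powr_powr)
    finally show ?thesis .
  qed
  then show "NN w \<mu> \<Omega>a \<Omega>b (\<lambda>x. k * u x) (\<lambda>x. k * v x) = NN w \<mu> \<Omega>a \<Omega>b u v / ?F powr (2/(\<alpha>+\<beta>))"
    unfolding NN_scale using assms(3) by (simp add: powr_minus_divide powr_minus divide_inverse)
qed



theorem theorem1p2:
  fixes w :: "'v \<Rightarrow> 'v \<Rightarrow> real" and \<mu> :: "'v \<Rightarrow> real" and \<mu>min \<alpha> \<beta> :: real
    and \<Omega>a \<Omega>b :: "'v set"
  assumes "weighted_graph w" and "locally_finite w" and "graph_connected w"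
    and "\<mu>min > 0" and "\<forall>x. \<mu> x \<ge> \<mu>min"
    and "\<alpha> > 1" and "\<beta> > 1"
    and "\<Omega>a \<noteq> {}" and "\<Omega>b \<noteq> {}" and "\<Omega>a \<inter> \<Omega>b \<noteq> {}"
    and "bounded_domain w \<Omega>a" and "bounded_domain w \<Omega>b" and "bounded_domain w (\<Omega>a \<inter> \<Omega>b)"
  shows "\<exists>u v. weak_solution w \<mu> \<Omega>a \<Omega>b \<alpha> \<beta> u v
           \<and> (u, v) \<in> nehari w \<mu> \<Omega>a \<Omega>b \<alpha> \<beta>
           \<and> J_Om w \<mu> \<Omega>a \<Omega>b \<alpha> \<beta> u v = c_nehari w \<mu> \<Omega>a \<Omega>b \<alpha> \<beta>"
proof -
  note wg = assms(1) and ab = assms(6,7)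
  have fa: "finite \<Omega>a" by (rule finite_bounded_domain[OF assms(2,11)])
  have fb: "finite \<Omega>b" by (rule finite_bounded_domain[OF assms(2,12)])
  have mup: "\<forall>x. \<mu> x > 0" using assms(4,5) by (meson less_le_trans)
  define p where "p = \<alpha> + \<beta>"
  have p2: "p > 2" using ab unfolding p_def by simp
  define N where "N = (\<lambda>u v. NN w \<mu> \<Omega>a \<Omega>b u v)"
  define F where "F = (\<lambda>u v. FF \<mu> \<Omega>a \<Omega>b \<alpha> \<beta> u v)"
  define H where "H = H_Om \<Omega>a \<Omega>b"
  obtain x0 where x0: "x0 \<in> \<Omega>a" "x0 \<in> \<Omega>b" using assms(10) by auto
  define \<delta> where "\<delta> = (\<lambda>x. if x = x0 then (1::real) else 0)"
  have dH: "(\<delta>, \<delta>) \<in> H" using x0 unfolding H_def H_Om_def W0_def \<delta>_def by auto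
  have dF: "F \<delta> \<delta> > 0"
  proof -
    have "F \<delta> \<delta> = (\<Sum>x\<in>\<Omega>a \<union> \<Omega>b. if x = x0 then \<mu> x0 else 0)"
      unfolding F_def FF_def integ_def by (rule sum.cong) (auto simp: \<delta>_def)
    also have "\<dots> = \<mu> x0" using fa fb x0 by simp
    finally show ?thesis using mup by simp
  qed
  define k0 where "k0 = F \<delta> \<delta> powr (-1/(\<alpha>+\<beta>))"
  define u0 where "u0 = (\<lambda>x. k0 * \<delta> x)"
  have u0H: "(u0, u0) \<in> H" unfolding u0_def H_def using H_scale dH H_def by blast
  have u0F: "F u0 u0 = 1" unfolding u0_def k0_def F_def using normalize(2)[OF ab dF[unfolded F_def]] by blast
  define N0 where "N0 = N u0 u0"
  define S where "S = {q. (fst q, snd q) \<in> H \<and> F (fst q) (snd q) \<ge> 1 \<and> N (fst q) (snd q) \<le> N0}"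
  have u0S: "(u0, u0) \<in> S" unfolding S_def N0_def using u0H u0F by simp
  have N0nn: "N0 \<ge> 0" unfolding N0_def N_def using NN_nonneg[OF wg mup fa fb] by blast
  define R where "R = sqrt (N0 / \<mu>min)"
  define Ka where "Ka = (\<lambda>x. if x \<in> \<Omega>a then {-R..R} else {0::real})"
  define Kb where "Kb = (\<lambda>x. if x \<in> \<Omega>b then {-R..R} else {0::real})"
  have coord: "\<bar>u x\<bar> \<le> R \<and> \<bar>v x\<bar> \<le> R" if "N u v \<le> N0" "x \<in> \<Omega>a \<union> \<Omega>b" for u v x
  proof -
    have h: "\<mu> x * ((u x)\<^sup>2 + (v x)\<^sup>2) \<le> N0"
      using NN_lower[OF wg mup fa fb that(2), of u v] that(1) unfolding N_def by linarith
    have m: "\<mu>min \<le> \<mu> x" using assms(5) by blast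
    have "\<mu>min * (u x)\<^sup>2 \<le> \<mu> x * ((u x)\<^sup>2 + (v x)\<^sup>2)"
      by (rule mult_mono) (use m mup in \<open>auto simp: less_imp_le\<close>)
    with h have "\<mu>min * (u x)\<^sup>2 \<le> N0" by linarith
    then have "(u x)\<^sup>2 \<le> N0 / \<mu>min" using assms(4) by (simp add: pos_le_divide_eq mult.commute)
    then have 1: "\<bar>u x\<bar> \<le> R" unfolding R_def by (metis real_sqrt_abs real_sqrt_le_mono)
    have "\<mu>min * (v x)\<^sup>2 \<le> \<mu> x * ((u x)\<^sup>2 + (v x)\<^sup>2)"
      by (rule mult_mono) (use m mup in \<open>auto simp: less_imp_le\<close>)
    with h have "\<mu>min * (v x)\<^sup>2 \<le> N0" by linarith
    then have "(v x)\<^sup>2 \<le> N0 / \<mu>min" using assms(4) by (simp add: pos_le_divide_eq mult.commute)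
    then have 2: "\<bar>v x\<bar> \<le> R" unfolding R_def by (metis real_sqrt_abs real_sqrt_le_mono)
    from 1 2 show ?thesis ..
  qed
  have Seq: "S = (Pi UNIV Ka \<times> Pi UNIV Kb) \<inter> ({q. 1 \<le> F (fst q) (snd q)} \<inter> {q. N (fst q) (snd q) \<le> N0})"
  proof (rule set_eqI)
    fix q :: "('v \<Rightarrow> real) \<times> ('v \<Rightarrow> real)"
    obtain u v where q: "q = (u, v)" by fastforce
    show "q \<in> S \<longleftrightarrow> q \<in> (Pi UNIV Ka \<times> Pi UNIV Kb) \<inter> ({q. 1 \<le> F (fst q) (snd q)} \<inter> {q. N (fst q) (snd q) \<le> N0})"
    proof
      assume "q \<in> S"
      then have H: "(u, v) \<in> H" and F1: "1 \<le> F u v" and NN0: "N u v \<le> N0" unfolding S_def q by auto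
      have "u \<in> Pi UNIV Ka"
      proof
        fix x show "u x \<in> Ka x"
          using H coord[OF NN0, of x] unfolding Ka_def H_def H_Om_def W0_def by (auto simp: abs_le_iff)
      qed
      moreover have "v \<in> Pi UNIV Kb"
      proof
        fix x show "v x \<in> Kb x"
          using H coord[OF NN0, of x] unfolding Kb_def H_def H_Om_def W0_def by (auto simp: abs_le_iff)
      qed
      ultimately show "q \<in> (Pi UNIV Ka \<times> Pi UNIV Kb) \<inter> ({q. 1 \<le> F (fst q) (snd q)} \<inter> {q. N (fst q) (snd q) \<le> N0})"
        using F1 NN0 q by simp
    next
      assume "q \<in> (Pi UNIV Ka \<times> Pi UNIV Kb) \<inter> ({q. 1 \<le> F (fst q) (snd q)} \<inter> {q. N (fst q) (snd q) \<le> N0})"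
      then have "u \<in> Pi UNIV Ka" "v \<in> Pi UNIV Kb" "1 \<le> F u v" "N u v \<le> N0" unfolding q by auto
      moreover have "(u, v) \<in> H"
        using calculation(1,2) unfolding H_def H_Om_def W0_def Ka_def Kb_def Pi_def
        by (auto split: if_splits)
      ultimately show "q \<in> S" unfolding S_def q by simp
    qed
  qed
  have Scomp: "compact S"
  proof -
    have "compact (Pi UNIV Ka)" by (rule compact_Pi_UNIV) (auto simp: Ka_def)
    moreover have "compact (Pi UNIV Kb)" by (rule compact_Pi_UNIV) (auto simp: Kb_def)
    ultimately have c: "compact (Pi UNIV Ka \<times> Pi UNIV Kb)" by (rule compact_Times)
    have c1: "closed {q::('v \<Rightarrow> real) \<times> ('v \<Rightarrow> real). 1 \<le> F (fst q) (snd q)}"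
      unfolding F_def using ab by (intro closed_Collect_le continuous_on_const cont_FF) auto
    have c2: "closed {q::('v \<Rightarrow> real) \<times> ('v \<Rightarrow> real). N (fst q) (snd q) \<le> N0}"
      unfolding N_def by (intro closed_Collect_le continuous_on_const cont_NN)
    show ?thesis unfolding Seq using c c1 c2 by blast
  qed
  obtain qs where qsS: "qs \<in> S" and qsmin: "\<forall>q\<in>S. N (fst qs) (snd qs) \<le> N (fst q) (snd q)"
    using continuous_attains_inf[OF Scomp _ cont_NN[of S w \<mu> \<Omega>a \<Omega>b]] u0S unfolding N_def by blast
  obtain us vs where qs: "qs = (us, vs)" by fastforce
  define Ns where "Ns = N us vs"
  have usH: "(us, vs) \<in> H" and Fs1: "F us vs \<ge> 1" and NsN0: "Ns \<le> N0"
    using qsS unfolding S_def qs Ns_def by auto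
  have MIN: "Ns \<le> N u v / F u v powr (2/p)" if uvH: "(u, v) \<in> H" and Fp: "F u v > 0" for u v
  proof -
    define k where "k = F u v powr (-1/(\<alpha>+\<beta>))"
    have zH: "(\<lambda>x. k * u x, \<lambda>x. k * v x) \<in> H" using H_scale uvH unfolding H_def by blast
    have zF: "F (\<lambda>x. k * u x) (\<lambda>x. k * v x) = 1"
      unfolding k_def F_def using normalize(2)[OF ab Fp[unfolded F_def]] by blast
    have zN: "N (\<lambda>x. k * u x) (\<lambda>x. k * v x) = N u v / F u v powr (2/p)"
      unfolding k_def F_def N_def p_def using normalize(3)[OF ab Fp[unfolded F_def]] by blast
    show ?thesis
    proof (cases "N (\<lambda>x. k * u x) (\<lambda>x. k * v x) \<le> N0")
      case True
      then have "(\<lambda>x. k * u x, \<lambda>x. k * v x) \<in> S" unfolding S_def using zH zF by simp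
      then show ?thesis using qsmin zN unfolding qs Ns_def by fastforce
    next
      case False
      then show ?thesis using NsN0 zN by linarith
    qed
  qed
  have F00: "F (\<lambda>_. 0) (\<lambda>_. 0) = 0" unfolding F_def FF_def integ_def by simp
  have N00: "N (\<lambda>_. 0) (\<lambda>_. 0) = 0" unfolding N_def NN_def inner_H_def integ_def Gam_def by simp
  have usnz: "(us, vs) \<noteq> (\<lambda>_. 0, \<lambda>_. 0)" using Fs1 F00 by auto
  have Nspos: "Ns > 0" unfolding Ns_def N_def using NN_pos[OF wg mup fa fb usH[unfolded H_def] usnz] .
  have Fs: "F us vs = 1"
  proof (rule ccontr)
    assume "F us vs \<noteq> 1"
    then have g: "F us vs > 1" using Fs1 by simp
    then have "F us vs powr (2/p) > 1" using p2 by (intro gr_one_powr) auto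
    moreover have "Ns \<le> Ns / F us vs powr (2/p)" using MIN[OF usH] g unfolding Ns_def by simp
    moreover have "F us vs powr (2/p) > 0" using g by simp
    ultimately have "Ns * F us vs powr (2/p) \<le> Ns" "Ns * 1 < Ns * F us vs powr (2/p)"
      using Nspos by (simp_all add: pos_le_divide_eq)
    then show False by simp
  qed
  have EL: "inner_H w \<mu> \<Omega>a \<Omega>b us vs \<xi> \<eta> = Ns * DD \<mu> \<Omega>a \<Omega>b \<alpha> \<beta> us vs \<xi> \<eta> / p"
    if dH: "(\<xi>, \<eta>) \<in> H" for \<xi> \<eta>
  proof -
    define B where "B = inner_H w \<mu> \<Omega>a \<Omega>b us vs \<xi> \<eta>"
    define D where "D = DD \<mu> \<Omega>a \<Omega>b \<alpha> \<beta> us vs \<xi> \<eta>"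
    define fN where "fN = (\<lambda>s. N (\<lambda>x. us x + s * \<xi> x) (\<lambda>x. vs x + s * \<eta> x))"
    define fF where "fF = (\<lambda>s. F (\<lambda>x. us x + s * \<xi> x) (\<lambda>x. vs x + s * \<eta> x))"
    have hN: "(fN has_real_derivative 2 * B) (at 0)" unfolding fN_def N_def B_def by (rule NN_deriv)
    have hF: "(fF has_real_derivative D) (at 0)" unfolding fF_def F_def D_def by (rule FF_deriv[OF ab])
    have fF0: "fF 0 = 1" unfolding fF_def using Fs by simp
    have fN0: "fN 0 = Ns" unfolding fN_def Ns_def by simp
    have hFp: "((\<lambda>s. fF s powr (2/p)) has_real_derivative (2/p) * fF 0 powr (2/p - of_nat 1) * D) (at 0)"
      by (rule DERIV_fun_powr[OF hF]) (simp add: fF0)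
    have hh0: "((\<lambda>s. fN s / fF s powr (2/p)) has_real_derivative
       (2 * B * fF 0 powr (2/p) - fN 0 * ((2/p) * fF 0 powr (2/p - of_nat 1) * D)) / (fF 0 powr (2/p) * fF 0 powr (2/p))) (at 0)"
      by (rule DERIV_divide[OF hN hFp]) (simp add: fF0)
    have hh: "((\<lambda>s. fN s / fF s powr (2/p)) has_real_derivative 2 * B - Ns * ((2/p) * D)) (at 0)"
      using hh0 by (simp add: fF0 fN0)
    have "eventually (\<lambda>s. fF s > 0) (at 0)"
    proof -
      have "(fF \<longlongrightarrow> fF 0) (at 0)" using DERIV_isCont[OF hF] by (simp add: isCont_def)
      then show ?thesis using fF0 by (intro order_tendstoD) auto
    qed
    then obtain d where d: "d > 0" "\<And>s. s \<noteq> 0 \<Longrightarrow> dist s 0 < d \<Longrightarrow> fF s > 0"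
      unfolding eventually_at by blast
    have "\<forall>y. \<bar>0 - y\<bar> < d \<longrightarrow> fN 0 / fF 0 powr (2/p) \<le> fN y / fF y powr (2/p)"
    proof (intro allI impI)
      fix y :: real assume y: "\<bar>0 - y\<bar> < d"
      show "fN 0 / fF 0 powr (2/p) \<le> fN y / fF y powr (2/p)"
      proof (cases "y = 0")
        case True then show ?thesis by simp
      next
        case False
        then have "fF y > 0" using d y by (simp add: dist_real_def)
        moreover have "(\<lambda>x. us x + y * \<xi> x, \<lambda>x. vs x + y * \<eta> x) \<in> H"
          using H_add usH dH unfolding H_def by blast
        ultimately have "Ns \<le> fN y / fF y powr (2/p)" using MIN unfolding fN_def fF_def by blast
        then show ?thesis by (simp add: fF0 fN0)
      qed
    qed
    from DERIV_local_min[OF hh d(1) this] have "2 * B - Ns * ((2/p) * D) = 0" .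
    then show ?thesis unfolding B_def[symmetric] D_def[symmetric] using p2 by (simp add: field_simps)
  qed
  define lam where "lam = Ns powr (1/(p-2))"
  have lp: "lam > 0" unfolding lam_def using Nspos by simp
  have lp2: "lam powr (p-2) = Ns" unfolding lam_def using Nspos p2 by (simp add: powr_powr)
  have lpm1: "lam powr (p-1) = lam * Ns"
  proof -
    have "lam powr (p-1) = lam powr ((p-2) + 1)" by simp
    also have "\<dots> = lam powr (p-2) * lam powr 1" by (simp only: powr_add)
    finally show ?thesis using lp lp2 by simp
  qed
  have lpp: "lam powr p = lam\<^sup>2 * Ns"
  proof -
    have "lam powr p = lam powr ((p-2) + 2)" by simp
    also have "\<dots> = lam powr (p-2) * lam powr 2" by (simp only: powr_add)
    finally show ?thesis using lp lp2 by (simp add: powr_numeral)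
  qed
  define U where "U = (\<lambda>x. lam * us x)"
  define V where "V = (\<lambda>x. lam * vs x)"
  have UVH: "(U, V) \<in> H" unfolding U_def V_def using H_scale usH unfolding H_def by blast
  have NUV: "N U V = lam powr p" unfolding U_def V_def N_def NN_scale lpp Ns_def[symmetric, unfolded N_def] by simp
  have FUV: "F U V = lam powr p" unfolding U_def V_def F_def FF_scale using Fs lp unfolding F_def p_def by simp
  have weak: "weak_solution w \<mu> \<Omega>a \<Omega>b \<alpha> \<beta> U V"
    unfolding weak_solution_def
  proof (intro conjI allI impI)
    show "(U, V) \<in> H_Om \<Omega>a \<Omega>b" using UVH unfolding H_def .
    fix \<xi> \<eta> assume dH: "(\<xi>, \<eta>) \<in> H_Om \<Omega>a \<Omega>b"
    have "inner_H w \<mu> \<Omega>a \<Omega>b U V \<xi> \<eta> = lam * inner_H w \<mu> \<Omega>a \<Omega>b us vs \<xi> \<eta>"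
      unfolding U_def V_def by (rule inner_scale)
    also have "\<dots> = lam * (Ns * DD \<mu> \<Omega>a \<Omega>b \<alpha> \<beta> us vs \<xi> \<eta> / p)" using EL dH unfolding H_def by simp
    also have "\<dots> = DD \<mu> \<Omega>a \<Omega>b \<alpha> \<beta> U V \<xi> \<eta> / (\<alpha> + \<beta>)"
      unfolding U_def V_def DD_scale[OF lp] p_def[symmetric] lpm1 by simp
    also have "\<dots> = integ \<mu> (\<Omega>a \<union> \<Omega>b) (\<lambda>x.
            \<alpha> / (\<alpha> + \<beta>) * \<bar>U x\<bar> powr (\<alpha> - 2) * U x * \<bar>V x\<bar> powr \<beta> * \<xi> x
          + \<beta> / (\<alpha> + \<beta>) * \<bar>U x\<bar> powr \<alpha> * \<bar>V x\<bar> powr (\<beta> - 2) * V x * \<eta> x)"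
      by (rule weak_rhs[symmetric]) simp
    finally show "inner_H w \<mu> \<Omega>a \<Omega>b U V \<xi> \<eta> = integ \<mu> (\<Omega>a \<union> \<Omega>b) (\<lambda>x.
            \<alpha> / (\<alpha> + \<beta>) * \<bar>U x\<bar> powr (\<alpha> - 2) * U x * \<bar>V x\<bar> powr \<beta> * \<xi> x
          + \<beta> / (\<alpha> + \<beta>) * \<bar>U x\<bar> powr \<alpha> * \<bar>V x\<bar> powr (\<beta> - 2) * V x * \<eta> x)" .
  qed
  have UVnz: "(U, V) \<noteq> (\<lambda>_. 0, \<lambda>_. 0)"
  proof
    assume "(U, V) = (\<lambda>_. 0, \<lambda>_. 0)"
    then have "N U V = 0" using N00 by simp
    then show False using NUV lp by simp
  qed
  have neh: "(U, V) \<in> nehari w \<mu> \<Omega>a \<Omega>b \<alpha> \<beta>"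
    unfolding nehari_iff[OF ab] using UVH UVnz NUV FUV unfolding H_def N_def F_def by simp
  have JUV: "J_Om w \<mu> \<Omega>a \<Omega>b \<alpha> \<beta> U V = (1/2 - 1/p) * lam powr p"
    using NUV FUV unfolding J_eq N_def F_def p_def by (simp add: algebra_simps)
  have cmin: "J_Om w \<mu> \<Omega>a \<Omega>b \<alpha> \<beta> U V \<le> J_Om w \<mu> \<Omega>a \<Omega>b \<alpha> \<beta> u v"
    if "(u, v) \<in> nehari w \<mu> \<Omega>a \<Omega>b \<alpha> \<beta>" for u v
  proof -
    have uvH: "(u, v) \<in> H" and uvnz: "(u, v) \<noteq> (\<lambda>_. 0, \<lambda>_. 0)" and NF: "N u v = F u v"
      using that unfolding nehari_iff[OF ab] H_def N_def F_def by auto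
    define A where "A = N u v"
    have Ap: "A > 0" unfolding A_def N_def using NN_pos[OF wg mup fa fb uvH[unfolded H_def] uvnz] .
    have "Ns \<le> A / A powr (2/p)" using MIN[OF uvH] NF Ap unfolding A_def by simp
    also have "\<dots> = A powr (1 - 2/p)" using Ap by (simp add: powr_diff)
    finally have "Ns \<le> A powr (1 - 2/p)" .
    then have "Ns powr (p/(p-2)) \<le> (A powr (1 - 2/p)) powr (p/(p-2))"
      using Nspos p2 by (intro powr_mono2) auto
    also have "\<dots> = A"
    proof -
      have "(1 - 2/p) * (p/(p-2)) = 1" using p2 by (simp add: field_simps)
      then show ?thesis using Ap by (simp only: powr_powr powr_one_gt_zero_iff)
    qed
    finally have "Ns powr (p/(p-2)) \<le> A" .
    moreover have "lam powr p = Ns powr (p/(p-2))" unfolding lam_def using Nspos p2 by (simp add: powr_powr)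
    ultimately have "lam powr p \<le> A" by simp
    moreover have "J_Om w \<mu> \<Omega>a \<Omega>b \<alpha> \<beta> u v = (1/2 - 1/p) * A"
      using NF unfolding J_eq A_def N_def F_def p_def by (simp add: algebra_simps)
    moreover have "1/2 - 1/p > 0" using p2 by (simp add: field_simps)
    ultimately show ?thesis unfolding JUV by simp
  qed
  have "c_nehari w \<mu> \<Omega>a \<Omega>b \<alpha> \<beta> = J_Om w \<mu> \<Omega>a \<Omega>b \<alpha> \<beta> U V"
    unfolding c_nehari_def
  proof (rule cInf_eq_minimum)
    show "J_Om w \<mu> \<Omega>a \<Omega>b \<alpha> \<beta> U V \<in> (\<lambda>(u, v). J_Om w \<mu> \<Omega>a \<Omega>b \<alpha> \<beta> u v) ` nehari w \<mu> \<Omega>a \<Omega>b \<alpha> \<beta>"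
      using neh by force
    fix y assume "y \<in> (\<lambda>(u, v). J_Om w \<mu> \<Omega>a \<Omega>b \<alpha> \<beta> u v) ` nehari w \<mu> \<Omega>a \<Omega>b \<alpha> \<beta>"
    then show "J_Om w \<mu> \<Omega>a \<Omega>b \<alpha> \<beta> U V \<le> y" using cmin by auto
  qed
  then show ?thesis using weak neh by metis
qed

end
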